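(* Let $\mathcal{P}_1,\mathcal{P}_2\subseteq\mathbb{R}^n$ be non-empty not necessarily closed (NNC) convex polyhedra. Suppose there exist a linear constraint $\beta=(\langle\mathbf{a},\mathbf{x}\rangle\bowtie b)$ with $\mathbf{a}\neq\mathbf{0}$ and $\bowtie\in\{<,\le\}$, and a vector $\mathbf{p}\in\mathbb{R}^n$ such that: (1) $\mathbf{p}$ saturates $\beta$, i.e., $\langle\mathbf{a},\mathbf{p}\rangle=b$; (2) every point of $\mathcal{P}_1$ satisfies $\beta$, while some point of $\mathcal{P}_2$ violates $\beta$; (3) $\mathbf{p}\in\mathbb{C}(\mathcal{P}_1)\setminus\mathbb{C}(\mathcal{P}_2)$. Then $\mathcal{P}_1\uplus\mathcal{P}_2\neq\mathcal{P}_1\cup\mathcal{P}_2$.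
   Context: An NNC convex polyhedron in $\mathbb{R}^n$ is the set of solutions of a finite system of strict ($\langle\mathbf{a},\mathbf{x}\rangle<b$) and non-strict ($\langle\mathbf{a},\mathbf{x}\rangle\le b$) linear inequalities with $\mathbf{a}\neq\mathbf{0}$. $\mathbb{C}(S)$ denotes the topological closure of $S\subseteq\mathbb{R}^n$. $\mathcal{P}_1\uplus\mathcal{P}_2$ denotes the smallest NNC polyhedron containing $\mathcal{P}_1\cup\mathcal{P}_2$ (the NNC convex polyhedral hull). *)

theory Defs
  imports "HOL-Analysis.Analysis"
begin

definition sat_constraint :: "('a::euclidean_space \<times> real \<times> bool) \<Rightarrow> 'a \<Rightarrow> bool" where
  "sat_constraint c x = (case c of (a, b, s) \<Rightarrow> (if s then a \<bullet> x < b else a \<bullet> x \<le> b))"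

definition nnc_polyhedron :: "'a::euclidean_space set \<Rightarrow> bool" where
  "nnc_polyhedron P \<longleftrightarrow>
     (\<exists>C. finite C \<and> (\<forall>(a, b, s) \<in> C. a \<noteq> 0) \<and> P = {x. \<forall>c\<in>C. sat_constraint c x})"

definition nnc_hull :: "'a::euclidean_space set \<Rightarrow> 'a set \<Rightarrow> 'a set" where
  "nnc_hull P1 P2 = \<Inter> {Q. nnc_polyhedron Q \<and> P1 \<union> P2 \<subseteq> Q}"

end

theory Submission
  imports Defs
begin

lemma seg_in:
  fixes Q :: "'a::euclidean_space set"
  assumes "nnc_polyhedron Q" "x \<in> closure Q" "y \<in> Q" "0 < t" "t \<le> 1"
  shows "(1-t) *\<^sub>R x + t *\<^sub>R y \<in> Q"
proof -
  obtain C where C: "finite C" "Q = {x. \<forall>c\<in>C. sat_constraint c x}"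
    using assms(1) unfolding nnc_polyhedron_def by blast
  have "sat_constraint c ((1-t) *\<^sub>R x + t *\<^sub>R y)" if cC: "c \<in> C" for c
  proof -
    obtain a b s where c: "c = (a,b,s)" by (cases c) auto
    have "Q \<subseteq> {z. a \<bullet> z \<le> b}"
      using C cC by (auto simp: c sat_constraint_def split: if_splits)
    then have "closure Q \<subseteq> {z. a \<bullet> z \<le> b}"
      by (simp add: closed_halfspace_le closure_minimal)
    then have ax: "a \<bullet> x \<le> b" using assms(2) by auto
    have sy: "sat_constraint c y" using assms(3) C cC by auto
    have eq: "a \<bullet> ((1-t) *\<^sub>R x + t *\<^sub>R y) = (1-t) * (a \<bullet> x) + t * (a \<bullet> y)"
      by (simp add: inner_add_right)
    show ?thesis
    proof (cases s)
      case True
      then have "a \<bullet> y < b" using sy by (simp add: c sat_constraint_def)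
      then have "(1-t) * (a \<bullet> x) + t * (a \<bullet> y) < (1-t)*b + t*b"
        using ax assms(4,5) by (smt (verit) mult_left_mono mult_strict_left_mono)
      then show ?thesis using True eq by (simp add: c sat_constraint_def algebra_simps)
    next
      case False
      then have "a \<bullet> y \<le> b" using sy by (simp add: c sat_constraint_def)
      then have "(1-t) * (a \<bullet> x) + t * (a \<bullet> y) \<le> (1-t)*b + t*b"
        using ax assms(4,5) by (smt (verit) mult_left_mono)
      then show ?thesis using False eq by (simp add: c sat_constraint_def algebra_simps)
    qed
  qed
  then show ?thesis using C by auto
qed

theorem lemma2:
  fixes P1 P2 :: "(real ^ 'n) set" and a p :: "real ^ 'n" and b :: real and s :: bool
  assumes "nnc_polyhedron P1" and "nnc_polyhedron P2"
    and "P1 \<noteq> {}" and "P2 \<noteq> {}"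
    and "a \<noteq> 0"
    and "a \<bullet> p = b"
    and "\<forall>x\<in>P1. sat_constraint (a, b, s) x"
    and "\<exists>x\<in>P2. \<not> sat_constraint (a, b, s) x"
    and "p \<in> closure P1" and "p \<notin> closure P2"
  shows "nnc_hull P1 P2 \<noteq> P1 \<union> P2"
proof
  assume H: "nnc_hull P1 P2 = P1 \<union> P2"
  obtain q where q: "q \<in> P2" "\<not> sat_constraint (a, b, s) q" using assms(8) by blast
  define z where "z t = (1-t) *\<^sub>R p + t *\<^sub>R q" for t :: real
  have inhull: "z t \<in> nnc_hull P1 P2" if "0 < t" "t \<le> 1" for t
    unfolding nnc_hull_def z_def
  proof (rule InterI)
    fix Q assume "Q \<in> {Q. nnc_polyhedron Q \<and> P1 \<union> P2 \<subseteq> Q}"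
    then have Q: "nnc_polyhedron Q" "P1 \<union> P2 \<subseteq> Q" by auto
    have "p \<in> closure Q" using assms(9) closure_mono[of P1 Q] Q(2) by auto
    then show "(1-t) *\<^sub>R p + t *\<^sub>R q \<in> Q" using seg_in[OF Q(1) _ _ that] q Q(2) by auto
  qed
  have notP1: "z t \<notin> P1" if "0 < t" "t \<le> 1" for t
  proof
    assume "z t \<in> P1"
    then have sz: "sat_constraint (a, b, s) (z t)" using assms(7) by auto
    have eq: "a \<bullet> z t = (1-t) * b + t * (a \<bullet> q)"
      using assms(6) by (simp add: z_def inner_add_right)
    show False
    proof (cases s)
      case True
      then have "a \<bullet> q \<ge> b" "a \<bullet> z t < b" using q sz by (auto simp: sat_constraint_def)
      moreover have "t * b \<le> t * (a \<bullet> q)" using calculation(1) that by (simp add: mult_left_mono)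
      ultimately show False using eq by (simp add: algebra_simps)
    next
      case False
      then have "a \<bullet> q > b" "a \<bullet> z t \<le> b" using q sz by (auto simp: sat_constraint_def)
      moreover have "t * b < t * (a \<bullet> q)" using calculation(1) that by simp
      ultimately show False using eq by (simp add: algebra_simps)
    qed
  qed
  have inP2: "z (1 / real (Suc n)) \<in> P2" for n
  proof -
    have "0 < 1 / real (Suc n)" "1 / real (Suc n) \<le> 1" by (auto simp: field_simps)
    then show ?thesis using inhull notP1 H by blast
  qed
  have lim: "(\<lambda>n. z (1 / real (Suc n))) \<longlonglongrightarrow> z 0"
    unfolding z_def
    by (intro tendsto_intros LIMSEQ_Suc[OF lim_inverse_n'])
  moreover have "z 0 = p" by (simp add: z_def)
  ultimately have "\<exists>x. (\<forall>n. x n \<in> P2) \<and> x \<longlonglongrightarrow> p" using inP2 by metis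
  then have "p \<in> closure P2" unfolding closure_sequential by blast
  then show False using assms(10) by simp
qed

end
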